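(* Let $D_n$ be the degree (in-degree) of the sink in a random series-parallel network of size $n$ generated by the binary model. Then for $n\ge1$ $$\mathbb{E}(D_n)=\frac{1+\sqrt2}{2}\binom{n+\sqrt2-2}{n-1}-\frac{\sqrt2-1}{2}\binom{n-\sqrt2-2}{n-1},$$ and consequently $\mathbb{E}(D_n)\sim\frac{1+\sqrt2}{2}\frac{n^{\sqrt2-1}}{\Gamma(\sqrt2)}$ as $n\to\infty$.
   Context: Binary (uniform binary saturation) model of series-parallel networks: directed graphs with a source and a sink, edges oriented towards the sink. At step $1$ the network is a single edge from the source to the sink. At step $n>1$ one of the $n-1$ edges $(x,y)$ is chosen uniformly at random. If $x$ has out-degree $1$, a new parallel edge $(x,y)$ is added; if $x$ has out-degree $2$, $(x,y)$ is replaced by $(x,z),(z,y)$ with $z$ a new vertex. The network after step $n$ has size $n$ ($n$ edges). Binomial coefficients with real upper argument: $\binom{a}{k}=a(a-1)\cdots(a-k+1)/k!$. *)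

theory Defs
  imports "HOL-Analysis.Analysis" "HOL-Probability.Probability" "HOL-Library.Landau_Symbols"
begin

text \<open>A network is a list of directed edges (x,y) over vertices of type nat
 (parallel edges = repeated list entries). The source is vertex 0, the sink is vertex 1.\<close>

type_synonym network = "(nat \<times> nat) list"

definition source :: nat where "source = 0"
definition sink :: nat where "sink = 1"

definition outdeg :: "network \<Rightarrow> nat \<Rightarrow> nat" where
  "outdeg E v = length (filter (\<lambda>e. fst e = v) E)"

definition indeg :: "network \<Rightarrow> nat \<Rightarrow> nat" where
  "indeg E v = length (filter (\<lambda>e. snd e = v) E)"

definition fresh_vertex :: "network \<Rightarrow> nat" where
  "fresh_vertex E = Suc (Max (insert sink (insert source (fst ` set E \<union> snd ` set E))))"

definition grow_at :: "network \<Rightarrow> nat \<Rightarrow> network" where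
  "grow_at E i = (let (x, y) = E ! i in
     if outdeg E x = 1 then E @ [(x, y)]
     else (let z = fresh_vertex E in E[i := (x, z)] @ [(z, y)]))"

definition binary_step :: "network \<Rightarrow> network pmf" where
  "binary_step E = map_pmf (grow_at E) (pmf_of_set {..<length E})"

text \<open>binary_net k = random network after step k+1 (i.e. of size k+1).\<close>
primrec binary_net :: "nat \<Rightarrow> network pmf" where
  "binary_net 0 = return_pmf [(source, sink)]"
| "binary_net (Suc k) = binary_net k \<bind> binary_step"

definition network_of_size :: "nat \<Rightarrow> network pmf" where
  "network_of_size n = binary_net (n - 1)"

definition expected_sink_degree :: "nat \<Rightarrow> real" where
  "expected_sink_degree n =
     measure_pmf.expectation (network_of_size n) (\<lambda>E. real (indeg E sink))"

end

theory Submission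
  imports Defs "HOL-Real_Asymp.Real_Asymp"
begin


definition cntA :: "network \<Rightarrow> nat" where
  "cntA E = length (filter (\<lambda>e. snd e = sink \<and> outdeg E (fst e) = 1) E)"
definition cntB :: "network \<Rightarrow> nat" where
  "cntB E = length (filter (\<lambda>e. snd e = sink \<and> outdeg E (fst e) \<noteq> 1) E)"

lemma indeg_AB: "indeg E sink = cntA E + cntB E"
proof -
  have "length (filter (\<lambda>e. snd e = sink) E) =
     length (filter (\<lambda>e. outdeg E (fst e) = 1) (filter (\<lambda>e. snd e = sink) E)) +
     length (filter (\<lambda>e. \<not> outdeg E (fst e) = 1) (filter (\<lambda>e. snd e = sink) E))"
    by (rule sum_length_filter_compl[symmetric])
  then show ?thesis unfolding indeg_def cntA_def cntB_def by (simp add: filter_filter conj_commute)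
qed

lemma split_cnt: "length (filter P xs) = length (filter (\<lambda>e. P e \<and> fst e \<noteq> x) xs) + length (filter P (filter (\<lambda>e. fst e = x) xs))"
  by (induction xs) auto

lemma filter_update_cnt: "i < length xs \<Longrightarrow>
  length (filter P (xs[i:=v])) + (if P (xs!i) then 1 else 0) = length (filter P xs) + (if P v then 1 else 0)"
proof (induction xs arbitrary: i)
  case Nil then show ?case by simp
next
  case (Cons a xs) then show ?case by (cases i) auto
qed

lemma fresh_props:
  assumes "z = fresh_vertex E"
  shows "z \<notin> fst ` set E" "z \<notin> snd ` set E" "z \<noteq> sink"
proof -
  let ?S = "insert sink (insert source (fst ` set E \<union> snd ` set E))"
  have fin: "finite ?S" by simp
  have "\<And>w. w \<in> ?S \<Longrightarrow> w < z" using Max_ge[OF fin] assms unfolding fresh_vertex_def by (meson le_imp_less_Suc)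
  then show "z \<notin> fst ` set E" "z \<notin> snd ` set E" "z \<noteq> sink" by auto
qed

lemma case1:
  assumes i: "i < length E" and exy: "E ! i = (x, y)" and o: "outdeg E x = 1"
  shows "cntA (E @ [(x,y)]) + (if y = sink then 1 else 0) = cntA E"
    and "cntB (E @ [(x,y)]) = cntB E + (if y = sink then 2 else 0)"
proof -
  have od: "\<And>w. outdeg (E @ [(x,y)]) w = outdeg E w + (if w = x then 1 else 0)"
    by (simp add: outdeg_def)
  have mem: "(x,y) \<in> set E" using i exy nth_mem by metis
  have fx: "filter (\<lambda>e. fst e = x) E = [(x,y)]"
  proof -
    have l: "length (filter (\<lambda>e. fst e = x) E) = 1" using o by (simp add: outdeg_def)
    then obtain a where a: "filter (\<lambda>e. fst e = x) E = [a]" by (auto simp: length_Suc_conv)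
    have "(x,y) \<in> set (filter (\<lambda>e. fst e = x) E)" using mem by simp
    then show ?thesis using a by simp
  qed
  let ?P = "\<lambda>e. snd e = sink \<and> outdeg E (fst e) = 1"
  let ?Q = "\<lambda>e. snd e = sink \<and> outdeg E (fst e) \<noteq> 1"
  have A0: "filter (\<lambda>e. snd e = sink \<and> outdeg (E @ [(x,y)]) (fst e) = 1) E = filter (\<lambda>e. ?P e \<and> fst e \<noteq> x) E"
    by (rule filter_cong) (auto simp: od o)
  have A1: "cntA (E @ [(x,y)]) = length (filter (\<lambda>e. ?P e \<and> fst e \<noteq> x) E)"
    unfolding cntA_def using A0 by (simp add: od o)
  have A2: "cntA E = length (filter (\<lambda>e. ?P e \<and> fst e \<noteq> x) E) + (if y = sink then 1 else 0)"
    unfolding cntA_def by (subst split_cnt[of _ _ x]) (simp add: fx o)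
  show "cntA (E @ [(x,y)]) + (if y = sink then 1 else 0) = cntA E" using A1 A2 by simp
  have B0: "length (filter (\<lambda>e. snd e = sink \<and> outdeg (E @ [(x,y)]) (fst e) \<noteq> 1) E)
       = length (filter (\<lambda>e. ?Q e \<and> fst e \<noteq> x) E) + (if y = sink then 1 else 0)"
  proof -
    have "filter (\<lambda>e. snd e = sink \<and> outdeg (E @ [(x,y)]) (fst e) \<noteq> 1) E = filter (\<lambda>e. snd e = sink \<and> (fst e = x \<or> ?Q e)) E"
      by (rule filter_cong) (auto simp: od o)
    moreover have "filter (\<lambda>e. snd e = sink \<and> (fst e = x \<or> ?Q e)) (filter (\<lambda>e. fst e = x) E) = (if y = sink then [(x,y)] else [])"
      by (simp add: fx)
    moreover have "filter (\<lambda>e. (snd e = sink \<and> (fst e = x \<or> ?Q e)) \<and> fst e \<noteq> x) E = filter (\<lambda>e. ?Q e \<and> fst e \<noteq> x) E"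
      by (rule filter_cong) auto
    ultimately show ?thesis using split_cnt[of "\<lambda>e. snd e = sink \<and> (fst e = x \<or> ?Q e)" E x] by simp
  qed
  have B1: "cntB (E @ [(x,y)]) = length (filter (\<lambda>e. ?Q e \<and> fst e \<noteq> x) E) + (if y = sink then 2 else 0)"
    unfolding cntB_def using B0 by (simp add: od o)
  have B2: "cntB E = length (filter (\<lambda>e. ?Q e \<and> fst e \<noteq> x) E)"
    unfolding cntB_def by (subst split_cnt[of _ _ x]) (simp add: fx o)
  show "cntB (E @ [(x,y)]) = cntB E + (if y = sink then 2 else 0)" using B1 B2 by simp
qed

lemma case2:
  assumes i: "i < length E" and exy: "E ! i = (x, y)" and o: "outdeg E x \<noteq> 1"
    and z: "z = fresh_vertex E"
  shows "cntA (E[i := (x,z)] @ [(z,y)]) = cntA E + (if y = sink then 1 else 0)"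
    and "cntB (E[i := (x,z)] @ [(z,y)]) + (if y = sink then 1 else 0) = cntB E"
proof -
  note fp = fresh_props[OF z]
  have mem: "(x,y) \<in> set E" using i exy by (metis nth_mem)
  have zx: "z \<noteq> x" using fp(1) mem by force
  have oz: "outdeg E z = 0" using fp(1) by (auto simp: outdeg_def filter_empty_conv)
  have odu: "\<And>w. outdeg (E[i := (x,z)]) w = outdeg E w"
    unfolding outdeg_def using filter_update_cnt[OF i, of "\<lambda>e. fst e = _" "(x,z)"] exy
    by (metis (no_types, lifting) add_right_cancel fst_conv)
  have od: "\<And>w. outdeg (E[i := (x,z)] @ [(z,y)]) w = outdeg E w + (if w = z then 1 else 0)"
    using odu by (simp add: outdeg_def)
  let ?E' = "E[i := (x,z)] @ [(z,y)]"
  let ?P = "\<lambda>e. snd e = sink \<and> outdeg E (fst e) = 1"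
  let ?Q = "\<lambda>e. snd e = sink \<and> outdeg E (fst e) \<noteq> 1"
  have setu: "set (E[i := (x,z)]) \<subseteq> insert (x,z) (set E)" by (rule set_update_subset_insert)
  have fA: "filter (\<lambda>e. snd e = sink \<and> outdeg ?E' (fst e) = 1) (E[i := (x,z)]) = filter ?P (E[i := (x,z)])"
  proof (rule filter_cong[OF refl])
    fix e assume "e \<in> set (E[i := (x,z)])"
    then have "e = (x,z) \<or> e \<in> set E" using setu by auto
    then show "(snd e = sink \<and> outdeg ?E' (fst e) = 1) = ?P e"
    proof
      assume "e = (x,z)" then show ?thesis using fp(3) by simp
    next
      assume "e \<in> set E" then have "fst e \<noteq> z" using fp(1) by force
      then show ?thesis using od by simp
    qed
  qed
  have fB: "filter (\<lambda>e. snd e = sink \<and> outdeg ?E' (fst e) \<noteq> 1) (E[i := (x,z)]) = filter ?Q (E[i := (x,z)])"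
  proof (rule filter_cong[OF refl])
    fix e assume "e \<in> set (E[i := (x,z)])"
    then have "e = (x,z) \<or> e \<in> set E" using setu by auto
    then show "(snd e = sink \<and> outdeg ?E' (fst e) \<noteq> 1) = ?Q e"
    proof
      assume "e = (x,z)" then show ?thesis using fp(3) by simp
    next
      assume "e \<in> set E" then have "fst e \<noteq> z" using fp(1) by force
      then show ?thesis using od by simp
    qed
  qed
  have uA: "length (filter ?P (E[i := (x,z)])) = cntA E"
    using filter_update_cnt[OF i, of ?P "(x,z)"] exy o fp unfolding cntA_def by simp
  have uB: "length (filter ?Q (E[i := (x,z)])) + (if y = sink then 1 else 0) = cntB E"
    using filter_update_cnt[OF i, of ?Q "(x,z)"] exy o fp unfolding cntB_def by simp
  show "cntA ?E' = cntA E + (if y = sink then 1 else 0)"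
    using uA fA od oz zx by (simp add: cntA_def)
  show "cntB ?E' + (if y = sink then 1 else 0) = cntB E"
    using uB fB od oz zx by (simp add: cntB_def)
qed


definition dA :: "network \<Rightarrow> nat \<Rightarrow> real" where
  "dA E i = (if snd (E!i) = sink then (if outdeg E (fst (E!i)) = 1 then -1 else 1) else 0)"
definition dB :: "network \<Rightarrow> nat \<Rightarrow> real" where
  "dB E i = (if snd (E!i) = sink then (if outdeg E (fst (E!i)) = 1 then 2 else -1) else 0)"

lemma grow_cnt:
  assumes i: "i < length E"
  shows "real (cntA (grow_at E i)) = real (cntA E) + dA E i"
    and "real (cntB (grow_at E i)) = real (cntB E) + dB E i"
proof -
  obtain x y where exy: "E ! i = (x,y)" by (cases "E ! i")
  show "real (cntA (grow_at E i)) = real (cntA E) + dA E i"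
  proof (cases "outdeg E x = 1")
    case True
    then show ?thesis using case1(1)[OF i exy True] exy
      unfolding grow_at_def dA_def by (auto simp: Let_def split: if_splits)
  next
    case False
    then show ?thesis using case2(1)[OF i exy False refl] exy
      unfolding grow_at_def dA_def by (auto simp: Let_def split: if_splits)
  qed
  show "real (cntB (grow_at E i)) = real (cntB E) + dB E i"
  proof (cases "outdeg E x = 1")
    case True
    then show ?thesis using case1(2)[OF i exy True] exy
      unfolding grow_at_def dB_def by (auto simp: Let_def split: if_splits)
  next
    case False
    then show ?thesis using case2(2)[OF i exy False refl] exy
      unfolding grow_at_def dB_def by (auto simp: Let_def split: if_splits)
  qed
qed

lemma length_grow: "i < length E \<Longrightarrow> length (grow_at E i) = Suc (length E)"
  by (auto simp: grow_at_def Let_def split: prod.splits)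

lemma sum_ind: "(\<Sum>i<length xs. if P (xs!i) then 1 else (0::real)) = real (length (filter P xs))"
proof (induction xs)
  case Nil then show ?case by simp
next
  case (Cons a xs) then show ?case by (simp add: sum.lessThan_Suc_shift del: sum.lessThan_Suc)
qed

lemma sum_dA: "(\<Sum>i<length E. dA E i) = real (cntB E) - real (cntA E)"
proof -
  have "(\<Sum>i<length E. dA E i) = (\<Sum>i<length E. (if (\<lambda>e. snd e = sink \<and> outdeg E (fst e) \<noteq> 1) (E!i) then 1 else (0::real))
     - (if (\<lambda>e. snd e = sink \<and> outdeg E (fst e) = 1) (E!i) then 1 else (0::real)))"
    by (rule sum.cong) (auto simp: dA_def)
  also have "\<dots> = real (cntB E) - real (cntA E)"
    using sum_ind[of "\<lambda>e. snd e = sink \<and> outdeg E (fst e) = 1" E] sum_ind[of "\<lambda>e. snd e = sink \<and> outdeg E (fst e) \<noteq> 1" E]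
    by (simp add: sum_subtractf cntA_def cntB_def)
  finally show ?thesis .
qed

lemma sum_dB: "(\<Sum>i<length E. dB E i) = 2 * real (cntA E) - real (cntB E)"
proof -
  have "(\<Sum>i<length E. dB E i) = (\<Sum>i<length E. 2 * (if (\<lambda>e. snd e = sink \<and> outdeg E (fst e) = 1) (E!i) then 1 else (0::real))
     - (if (\<lambda>e. snd e = sink \<and> outdeg E (fst e) \<noteq> 1) (E!i) then 1 else (0::real)))"
    by (rule sum.cong) (auto simp: dB_def)
  also have "\<dots> = 2 * real (cntA E) - real (cntB E)"
    using sum_ind[of "\<lambda>e. snd e = sink \<and> outdeg E (fst e) = 1" E] sum_ind[of "\<lambda>e. snd e = sink \<and> outdeg E (fst e) \<noteq> 1" E]
    by (simp add: sum_subtractf cntA_def cntB_def flip: sum_distrib_left)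
  finally show ?thesis .
qed

lemma set_step: "E \<noteq> [] \<Longrightarrow> set_pmf (binary_step E) = grow_at E ` {..<length E}"
proof -
  assume "E \<noteq> []"
  then have "{..<length E} \<noteq> {}" by auto
  then show ?thesis by (simp add: binary_step_def)
qed

lemma finite_step: "length E = Suc k \<Longrightarrow> finite (set_pmf (binary_step E))"
  by (subst set_step) auto

lemma step_exp: "E \<noteq> [] \<Longrightarrow> measure_pmf.expectation (binary_step E) (h :: network \<Rightarrow> real) = (\<Sum>i<length E. h (grow_at E i)) / real (length E)"
proof -
  assume "E \<noteq> []"
  then have "{..<length E} \<noteq> {}" by auto
  then show ?thesis unfolding binary_step_def by (simp add: integral_pmf_of_set)
qed

lemma step_A: "E \<noteq> [] \<Longrightarrow> measure_pmf.expectation (binary_step E) (\<lambda>E. real (cntA E)) = real (cntA E) + (real (cntB E) - real (cntA E)) / real (length E)"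
  by (simp add: step_exp grow_cnt sum.distrib sum_dA add_divide_distrib)

lemma step_B: "E \<noteq> [] \<Longrightarrow> measure_pmf.expectation (binary_step E) (\<lambda>E. real (cntB E)) = real (cntB E) + (2 * real (cntA E) - real (cntB E)) / real (length E)"
  by (simp add: step_exp grow_cnt sum.distrib sum_dB add_divide_distrib)

lemma net_support: "finite (set_pmf (binary_net k)) \<and> (\<forall>E\<in>set_pmf (binary_net k). length E = Suc k)"
proof (induction k)
  case 0 then show ?case by simp
next
  case (Suc k)
  then have ne: "\<And>E. E \<in> set_pmf (binary_net k) \<Longrightarrow> E \<noteq> []" by auto
  have "set_pmf (binary_net (Suc k)) = (\<Union>E\<in>set_pmf (binary_net k). grow_at E ` {..<length E})"
    using ne by (simp add: set_step)
  then show ?case using Suc by (auto simp: length_grow)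
qed

definition ExN :: "nat \<Rightarrow> (network \<Rightarrow> real) \<Rightarrow> real" where
  "ExN k h = (\<Sum>E\<in>set_pmf (binary_net k). pmf (binary_net k) E * h E)"

lemma exp_Ex: "measure_pmf.expectation (binary_net k) h = ExN k h"
  unfolding ExN_def using net_support[of k]
  by (subst integral_measure_pmf_real[of "set_pmf (binary_net k)"]) (auto simp: mult.commute ExN_def)

lemma ExN_add: "ExN k (\<lambda>E. f E + g E) = ExN k f + ExN k g"
  by (simp add: ExN_def algebra_simps sum.distrib)
lemma ExN_diff: "ExN k (\<lambda>E. f E - g E) = ExN k f - ExN k g"
  by (simp add: ExN_def algebra_simps sum_subtractf)
lemma ExN_divide: "ExN k (\<lambda>E. f E / c) = ExN k f / c"
  by (simp add: ExN_def sum_divide_distrib)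
lemma ExN_cmult: "ExN k (\<lambda>E. c * f E) = c * ExN k f"
  by (simp add: ExN_def sum_distrib_left algebra_simps)

lemma ExN_Suc: "ExN (Suc k) h = ExN k (\<lambda>E. measure_pmf.expectation (binary_step E) h)"
proof -
  have "ExN (Suc k) h = measure_pmf.expectation (binary_net k \<bind> binary_step) h"
    using exp_Ex[of "Suc k" h] by simp
  also have "\<dots> = (\<Sum>E\<in>set_pmf (binary_net k). pmf (binary_net k) E *\<^sub>R measure_pmf.expectation (binary_step E) h)"
    using net_support[of k]
    by (intro pmf_expectation_bind) (auto simp: finite_step)
  finally show ?thesis by (simp add: ExN_def)
qed

lemma ExN_A: "ExN (Suc k) (\<lambda>E. real (cntA E)) = ExN k (\<lambda>E. real (cntA E)) + (ExN k (\<lambda>E. real (cntB E)) - ExN k (\<lambda>E. real (cntA E))) / real (Suc k)"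
proof -
  have "ExN (Suc k) (\<lambda>E. real (cntA E)) = ExN k (\<lambda>E. real (cntA E) + (real (cntB E) - real (cntA E)) / real (Suc k))"
    unfolding ExN_Suc unfolding ExN_def using net_support[of k]
    by (intro sum.cong refl) (subst step_A, auto)
  then show ?thesis
    by (simp only: ExN_add ExN_diff ExN_divide ExN_cmult)
qed

lemma ExN_B: "ExN (Suc k) (\<lambda>E. real (cntB E)) = ExN k (\<lambda>E. real (cntB E)) + (2 * ExN k (\<lambda>E. real (cntA E)) - ExN k (\<lambda>E. real (cntB E))) / real (Suc k)"
proof -
  have "ExN (Suc k) (\<lambda>E. real (cntB E)) = ExN k (\<lambda>E. real (cntB E) + (2 * real (cntA E) - real (cntB E)) / real (Suc k))"
    unfolding ExN_Suc unfolding ExN_def using net_support[of k]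
    by (intro sum.cong refl) (subst step_B, auto)
  then show ?thesis
    by (simp only: ExN_add ExN_diff ExN_divide ExN_cmult)
qed


definition G :: "real \<Rightarrow> nat \<Rightarrow> real" where
  "G c k = (real k + c) gchoose k"

lemma G_0 [simp]: "G c 0 = 1" by (simp add: G_def)

lemma G_Suc: "G c (Suc k) = G c k * (1 + c / real (Suc k))"
proof -
  have "of_nat (Suc k) * ((real (Suc k) + c) gchoose Suc k) = (real (Suc k) + c) * ((real (Suc k) + c - 1) gchoose k)"
    by (rule gbinomial_absorption)
  moreover have "real (Suc k) + c - 1 = real k + c" by simp
  ultimately have "real (Suc k) * G c (Suc k) = (real (Suc k) + c) * G c k"
    by (simp add: G_def)
  then show ?thesis by (simp add: field_simps)
qed

lemma closed_AB:
  "ExN k (\<lambda>E. real (cntA E)) = (G (sqrt 2 - 1) k + G (- sqrt 2 - 1) k) / 2 \<and>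
   ExN k (\<lambda>E. real (cntB E)) = sqrt 2 / 2 * (G (sqrt 2 - 1) k - G (- sqrt 2 - 1) k)"
proof (induction k)
  case 0
  have "cntA [(source, sink)] = 1" "cntB [(source, sink)] = 0"
    by (simp_all add: cntA_def cntB_def outdeg_def source_def sink_def)
  then show ?case by (simp add: ExN_def)
next
  case (Suc k)
  define g1 where "g1 = G (sqrt 2 - 1) k"
  define g2 where "g2 = G (- sqrt 2 - 1) k"
  define m where "m = real (Suc k)"
  have m: "m > 0" by (simp add: m_def)
  have s2: "sqrt 2 * sqrt 2 = (2::real)" by simp
  have IH: "ExN k (\<lambda>E. real (cntA E)) = (g1 + g2) / 2" "ExN k (\<lambda>E. real (cntB E)) = sqrt 2 / 2 * (g1 - g2)"
    using Suc by (simp_all add: g1_def g2_def)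
  have e1: "G (sqrt 2 - 1) (Suc k) = g1 * (1 + (sqrt 2 - 1) / m)" by (simp add: G_Suc g1_def m_def)
  have e2: "G (- sqrt 2 - 1) (Suc k) = g2 * (1 + (- sqrt 2 - 1) / m)" by (simp add: G_Suc g2_def m_def)
  have A: "(g1 + g2) / 2 + (sqrt 2 / 2 * (g1 - g2) - (g1 + g2) / 2) / m = (g1 * (1 + (sqrt 2 - 1) / m) + g2 * (1 + (- sqrt 2 - 1) / m)) / 2"
    using m by (simp add: field_simps)
  have B: "sqrt 2 / 2 * (g1 - g2) + (2 * ((g1 + g2) / 2) - sqrt 2 / 2 * (g1 - g2)) / m = sqrt 2 / 2 * (g1 * (1 + (sqrt 2 - 1) / m) - g2 * (1 + (- sqrt 2 - 1) / m))"
  proof -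
    have "sqrt 2 / 2 * (g1 * (1 + (sqrt 2 - 1) / m) - g2 * (1 + (- sqrt 2 - 1) / m))
      = sqrt 2 / 2 * (g1 - g2) + (sqrt 2 * sqrt 2 * (g1 + g2) / 2 - sqrt 2 / 2 * (g1 - g2)) / m"
      using m by (simp add: field_simps)
    then show ?thesis by (simp add: s2)
  qed
  show ?case
    unfolding ExN_A ExN_B IH e1 e2 m_def[symmetric] using A B by simp
qed

lemma expected_formula:
  "expected_sink_degree (Suc k) = (1 + sqrt 2) / 2 * G (sqrt 2 - 1) k - (sqrt 2 - 1) / 2 * G (- sqrt 2 - 1) k"
proof -
  have "expected_sink_degree (Suc k) = ExN k (\<lambda>E. real (cntA E) + real (cntB E))"
    unfolding expected_sink_degree_def network_of_size_def exp_Ex by (simp add: indeg_AB)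
  also have "\<dots> = (G (sqrt 2 - 1) k + G (- sqrt 2 - 1) k) / 2 + sqrt 2 / 2 * (G (sqrt 2 - 1) k - G (- sqrt 2 - 1) k)"
    by (simp only: ExN_add closed_AB)
  also have "\<dots> = (1 + sqrt 2) / 2 * G (sqrt 2 - 1) k - (sqrt 2 - 1) / 2 * G (- sqrt 2 - 1) k"
    by (simp add: field_simps)
  finally show ?thesis .
qed

lemma part1: "\<forall>n::nat. n \<ge> 1 \<longrightarrow>
           expected_sink_degree n =
             (1 + sqrt 2) / 2 * ((real n + sqrt 2 - 2) gchoose (n - 1))
           - (sqrt 2 - 1) / 2 * ((real n - sqrt 2 - 2) gchoose (n - 1))"
proof (intro allI impI)
  fix n :: nat assume "n \<ge> 1"
  then obtain k where n: "n = Suc k" by (cases n) auto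
  have e: "real n + sqrt 2 - 2 = real k + (sqrt 2 - 1)" "real n - sqrt 2 - 2 = real k + (- sqrt 2 - 1)"
    by (simp_all add: n)
  then show "expected_sink_degree n =
             (1 + sqrt 2) / 2 * ((real n + sqrt 2 - 2) gchoose (n - 1))
           - (sqrt 2 - 1) / 2 * ((real n - sqrt 2 - 2) gchoose (n - 1))"
    unfolding e using expected_formula[of k] by (simp add: n G_def)
qed



lemma G_asym: "(\<lambda>k. G c k * exp (- c * ln (real k))) \<longlonglongrightarrow> rGamma (c + 1)"
  using Gamma_gbinomial[of c] by (simp add: G_def add.commute)

lemma lim1: "(\<lambda>k::nat. real k powr (sqrt 2 - 1) / real (Suc k) powr (sqrt 2 - 1)) \<longlonglongrightarrow> 1"
  by real_asymp

lemma lim2: "(\<lambda>k::nat. real k powr (- sqrt 2 - 1) / real (Suc k) powr (sqrt 2 - 1)) \<longlonglongrightarrow> 0"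
  by real_asymp


lemma u_lim: "(\<lambda>k. G (sqrt 2 - 1) k / real (Suc k) powr (sqrt 2 - 1)) \<longlonglongrightarrow> inverse (Gamma (sqrt 2))"
proof -
  let ?c = "sqrt 2 - 1"
  have "(\<lambda>k. (G ?c k * exp (- ?c * ln (real k))) * (real k powr ?c / real (Suc k) powr ?c)) \<longlonglongrightarrow> rGamma (?c + 1) * 1"
    by (intro tendsto_mult G_asym lim1)
  then have L: "(\<lambda>k. (G ?c k * exp (- ?c * ln (real k))) * (real k powr ?c / real (Suc k) powr ?c)) \<longlonglongrightarrow> inverse (Gamma (sqrt 2))"
    by (simp add: rGamma_inverse_Gamma)
  show ?thesis
  proof (rule Lim_transform_eventually[OF L])
    show "\<forall>\<^sub>F k in sequentially. G ?c k * exp (- ?c * ln (real k)) * (real k powr ?c / real (Suc k) powr ?c) = G ?c k / real (Suc k) powr ?c"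
      using eventually_gt_at_top[of "0::nat"]
    proof eventually_elim
      case (elim k)
      then have "exp (- ?c * ln (real k)) = inverse (real k powr ?c)"
      proof -
        have "exp (- ?c * ln (real k)) = real k powr (- ?c)" using elim by (simp add: powr_def)
        then show ?thesis using powr_minus[of "real k" ?c] by simp
      qed
      moreover have "real k powr ?c > 0" using elim by simp
      ultimately show ?case by (simp add: field_simps)
    qed
  qed
qed

lemma v_lim: "(\<lambda>k. G (- sqrt 2 - 1) k / real (Suc k) powr (sqrt 2 - 1)) \<longlonglongrightarrow> 0"
proof -
  let ?c = "- sqrt 2 - 1"
  let ?d = "sqrt 2 - 1"
  have "(\<lambda>k. (G ?c k * exp (- ?c * ln (real k))) * (real k powr ?c / real (Suc k) powr ?d)) \<longlonglongrightarrow> rGamma (?c + 1) * 0"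
    by (intro tendsto_mult G_asym lim2)
  then have L: "(\<lambda>k. (G ?c k * exp (- ?c * ln (real k))) * (real k powr ?c / real (Suc k) powr ?d)) \<longlonglongrightarrow> 0"
    by simp
  show ?thesis
  proof (rule Lim_transform_eventually[OF L])
    show "\<forall>\<^sub>F k in sequentially. G ?c k * exp (- ?c * ln (real k)) * (real k powr ?c / real (Suc k) powr ?d) = G ?c k / real (Suc k) powr ?d"
      using eventually_gt_at_top[of "0::nat"]
    proof eventually_elim
      case (elim k)
      then have "exp (- ?c * ln (real k)) = inverse (real k powr ?c)"
      proof -
        have "exp (- ?c * ln (real k)) = real k powr (- ?c)" using elim by (simp add: powr_def)
        then show ?thesis using powr_minus[of "real k" ?c] by simp
      qed
      moreover have "real k powr ?c > 0" using elim by simp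
      ultimately show ?case by (simp add: field_simps)
    qed
  qed
qed

lemma part2: "(\<lambda>n. expected_sink_degree n) \<sim>[at_top]
           (\<lambda>n. (1 + sqrt 2) / 2 * (real n powr (sqrt 2 - 1) / Gamma (sqrt 2)))"
proof (rule asymp_equivI')
  define c1 where "c1 = (1 + sqrt 2) / 2"
  define c2 where "c2 = (sqrt 2 - 1) / 2"
  define \<Gamma> where "\<Gamma> = Gamma (sqrt 2)"
  have c1: "c1 > 0" by (simp add: c1_def add_pos_nonneg)
  have Gp: "\<Gamma> > 0" by (simp add: \<Gamma>_def)
  let ?u = "\<lambda>k. G (sqrt 2 - 1) k / real (Suc k) powr (sqrt 2 - 1)"
  let ?v = "\<lambda>k. G (- sqrt 2 - 1) k / real (Suc k) powr (sqrt 2 - 1)"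
  have "(\<lambda>k. \<Gamma> * ?u k - c2 / c1 * \<Gamma> * ?v k) \<longlonglongrightarrow> \<Gamma> * inverse \<Gamma> - c2 / c1 * \<Gamma> * 0"
    unfolding \<Gamma>_def by (intro tendsto_intros u_lim v_lim)
  then have L: "(\<lambda>k. \<Gamma> * ?u k - c2 / c1 * \<Gamma> * ?v k) \<longlonglongrightarrow> 1"
    using Gp by simp
  have "(\<lambda>k. expected_sink_degree (Suc k) / (c1 * (real (Suc k) powr (sqrt 2 - 1) / \<Gamma>))) \<longlonglongrightarrow> 1"
  proof (rule Lim_transform_eventually[OF L], intro always_eventually allI)
    fix k
    have P: "real (Suc k) powr (sqrt 2 - 1) > 0" by simp
    show "\<Gamma> * ?u k - c2 / c1 * \<Gamma> * ?v k = expected_sink_degree (Suc k) / (c1 * (real (Suc k) powr (sqrt 2 - 1) / \<Gamma>))"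
      unfolding expected_formula c1_def[symmetric] c2_def[symmetric]
      using P c1 Gp by (simp add: field_simps)
  qed
  then show "((\<lambda>n. expected_sink_degree n / ((1 + sqrt 2) / 2 * (real n powr (sqrt 2 - 1) / Gamma (sqrt 2)))) \<longlongrightarrow> 1) at_top"
    unfolding c1_def \<Gamma>_def by (subst filterlim_sequentially_Suc[symmetric]) simp
qed


theorem mainTheorem8:
  shows "(\<forall>n::nat. n \<ge> 1 \<longrightarrow>
           expected_sink_degree n =
             (1 + sqrt 2) / 2 * ((real n + sqrt 2 - 2) gchoose (n - 1))
           - (sqrt 2 - 1) / 2 * ((real n - sqrt 2 - 2) gchoose (n - 1)))
       \<and> (\<lambda>n. expected_sink_degree n) \<sim>[at_top]
           (\<lambda>n. (1 + sqrt 2) / 2 * (real n powr (sqrt 2 - 1) / Gamma (sqrt 2)))"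
  using part1 part2 by blast

end
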